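(* Let $f\in\Delta(\mathcal{G},\le)$, let $1\le\alpha\le\beta$, and suppose $f_\alpha\in\Delta(\mathcal{A},\le)$. Let $H,G_1,\dots,G_r$ be finite simple graphs and $q$ a positive integer such that $\widehat{H}\otimes\mathcal{C}_q\le\bigoplus_{d=1}^r\widehat{G_d}\otimes\mathcal{C}_d$. Then $f_\beta(\widehat{H}\otimes\mathcal{C}_q)\le f_\beta\big(\bigoplus_{d=1}^r\widehat{G_d}\otimes\mathcal{C}_d\big)$, i.e. $f(H)q^\beta\le\sum_{d=1}^r f(G_d)d^\beta$.
   Context: Graphs are finite simple undirected; $x\simeq x'$ means equal or adjacent. Strong product $G\boxtimes H$: vertex set $V(G)\times V(H)$, $(g,h)\simeq(g',h')$ iff $g\simeq g'$ and $h\simeq h'$. $\sqcup$ is disjoint union. $H\le G$ for graphs means there is a homomorphism from the complement of $H$ to the complement of $G$. $\mathcal{G}$ is the semiring of isomorphism classes of graphs with $\sqcup,\boxtimes$, and $\Delta(\mathcal{G},\le)$ is the set of maps $f$ from graphs to $\mathbb{R}_{\ge0}$ with $f(\text{empty graph})=0$, $f(K_1)=1$, $f(G\sqcup H)=f(G)+f(H)$, $f(G\boxtimes H)=f(G)f(H)$, and $H\le G\Rightarrow f(H)\le f(G)$. A noncommutative graph is a subspace $S\subseteq B(\mathcal{H})$ ($\mathcal{H}$ finite-dimensional complex Hilbert space) with $I\in S$, $S^*=S$; isomorphism is unitary conjugation. A cohomomorphism from $T\subseteq B(\mathcal{K})$ to $S\subseteq B(\mathcal{H})$ is a finite family of linear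 maps $E_i:\mathcal{K}\to\mathcal{H}$ with $\sum_iE_i^*E_i=I$ and $E_i^*SE_j\subseteq T$ for all $i,j$; write $T\le S$ if one exists. Tensor product and direct sum of noncommutative graphs are $\operatorname{span}\{A\otimes B\}$ and $\{A\oplus B\}$. For a graph $G$, $\widehat{G}=\operatorname{span}\{|x\rangle\langle x'|:x\simeq x'\}\subseteq B(\mathbb{C}^{V(G)})$; $\mathcal{C}_d=\mathbb{C}I\subseteq B(\mathbb{C}^d)$. $\mathcal{A}$ is the semiring (under $\oplus,\otimes$, isomorphism classes) generated by all $\widehat{G}$ and all $\mathcal{C}_d$; every element has the form $\bigoplus_{d=1}^r\widehat{G_d}\otimes\mathcal{C}_d$. For $f\in\Delta(\mathcal{G},\le)$ and $\alpha\ge1$, $f_\alpha:\mathcal{A}\to\mathbb{R}_{\ge0}$ is the semiring homomorphism $f_\alpha(\bigoplus_{d=1}^r\widehat{G_d}\otimes\mathcal{C}_d)=\sum_{d=1}^r f(G_d)d^\alpha$. $\Delta(\mathcal{A},\le)$ denotes the set of semiring homomorphisms $\mathcal{A}\to\mathbb{R}_{\ge0}$ that are monotone with respect to $\le$. *)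

theory Defs
  imports "HOL-Analysis.Analysis" "Jordan_Normal_Form.Schur_Decomposition"
begin

text \<open>A finite simple graph is represented as (n, E): vertex set {0..<n},
  adjacency relation E which is symmetric, irreflexive and vanishes outside {0..<n}.\<close>

type_synonym sgraph = "nat \<times> (nat \<Rightarrow> nat \<Rightarrow> bool)"

definition is_sgraph :: "sgraph \<Rightarrow> bool" where
  "is_sgraph G \<longleftrightarrow> (\<forall>x y. snd G x y \<longrightarrow> x < fst G \<and> y < fst G \<and> x \<noteq> y \<and> snd G y x)"

definition gsimeq :: "sgraph \<Rightarrow> nat \<Rightarrow> nat \<Rightarrow> bool" where
  "gsimeq G x y \<longleftrightarrow> x = y \<or> snd G x y"

definition gempty :: sgraph where "gempty = (0, \<lambda>_ _. False)"
definition gK1 :: sgraph where "gK1 = (1, \<lambda>_ _. False)"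

definition gdisj :: "sgraph \<Rightarrow> sgraph \<Rightarrow> sgraph" where
  "gdisj G H = (fst G + fst H,
     \<lambda>x y. (x < fst G \<and> y < fst G \<and> snd G x y) \<or>
           (fst G \<le> x \<and> fst G \<le> y \<and> snd H (x - fst G) (y - fst G)))"

text \<open>Strong product; vertex (g,h) is encoded as g * |V(H)| + h.\<close>
definition gstrong :: "sgraph \<Rightarrow> sgraph \<Rightarrow> sgraph" where
  "gstrong G H = (fst G * fst H,
     \<lambda>x y. x < fst G * fst H \<and> y < fst G * fst H \<and> x \<noteq> y \<and>
           gsimeq G (x div fst H) (y div fst H) \<and> gsimeq H (x mod fst H) (y mod fst H))"

text \<open>H \<le> G: there is a homomorphism from the complement of H to the complement of G.\<close>
definition gle :: "sgraph \<Rightarrow> sgraph \<Rightarrow> bool" where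
  "gle H G \<longleftrightarrow> (\<exists>\<phi>. (\<forall>x<fst H. \<phi> x < fst G) \<and>
     (\<forall>x<fst H. \<forall>y<fst H. x \<noteq> y \<and> \<not> snd H x y \<longrightarrow>
          \<phi> x \<noteq> \<phi> y \<and> \<not> snd G (\<phi> x) (\<phi> y)))"

definition Delta_G :: "(sgraph \<Rightarrow> real) \<Rightarrow> bool" where
  "Delta_G f \<longleftrightarrow>
     (\<forall>G. is_sgraph G \<longrightarrow> f G \<ge> 0) \<and>
     f gempty = 0 \<and> f gK1 = 1 \<and>
     (\<forall>G H. is_sgraph G \<longrightarrow> is_sgraph H \<longrightarrow> f (gdisj G H) = f G + f H) \<and>
     (\<forall>G H. is_sgraph G \<longrightarrow> is_sgraph H \<longrightarrow> f (gstrong G H) = f G * f H) \<and>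
     (\<forall>G H. is_sgraph G \<longrightarrow> is_sgraph H \<longrightarrow> gle H G \<longrightarrow> f H \<le> f G)"

text \<open>A noncommutative graph is given by its dimension N and a set of N x N complex
  matrices (a subspace of B(C^N)).\<close>

type_synonym ncgraph = "nat \<times> complex mat set"

definition cohom :: "ncgraph \<Rightarrow> ncgraph \<Rightarrow> complex mat list \<Rightarrow> bool" where
  "cohom T S Es \<longleftrightarrow>
     (\<forall>E\<in>set Es. E \<in> carrier_mat (fst S) (fst T)) \<and>
     foldr (\<lambda>E acc. mat_adjoint E * E + acc) Es (0\<^sub>m (fst T) (fst T)) = 1\<^sub>m (fst T) \<and>
     (\<forall>A\<in>snd S. \<forall>E\<in>set Es. \<forall>E'\<in>set Es. mat_adjoint E * A * E' \<in> snd T)"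

definition ncle :: "ncgraph \<Rightarrow> ncgraph \<Rightarrow> bool" where
  "ncle T S \<longleftrightarrow> (\<exists>Es. cohom T S Es)"

text \<open>Elements of the semiring A: a list Gs = [G_1,...,G_r] stands for
  \<Oplus>_{d=1}^r hat(G_d) \<otimes> C_d, acting on \<Oplus>_d C^{V(G_d)} \<otimes> C^d.
  Block d occupies indices off_d + x*d + k (x < |V(G_d)|, k < d).\<close>

definition A_dim :: "sgraph list \<Rightarrow> nat" where
  "A_dim Gs = (\<Sum>d\<in>{1..length Gs}. fst (Gs ! (d - 1)) * d)"

definition A_off :: "sgraph list \<Rightarrow> nat \<Rightarrow> nat" where
  "A_off Gs d = (\<Sum>d'\<in>{1..<d}. fst (Gs ! (d' - 1)) * d')"

text \<open>The generator |x><x'| \<otimes> I_d placed in block d.\<close>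
definition A_gen :: "sgraph list \<Rightarrow> nat \<Rightarrow> nat \<Rightarrow> nat \<Rightarrow> complex mat" where
  "A_gen Gs d x x' = mat (A_dim Gs) (A_dim Gs) (\<lambda>(i, j).
     if \<exists>k<d. i = A_off Gs d + x * d + k \<and> j = A_off Gs d + x' * d + k then 1 else 0)"

definition A_nc :: "sgraph list \<Rightarrow> ncgraph" where
  "A_nc Gs = (A_dim Gs,
     {A. \<exists>c :: nat \<Rightarrow> nat \<Rightarrow> nat \<Rightarrow> complex.
        A = mat (A_dim Gs) (A_dim Gs) (\<lambda>(i, j).
          \<Sum>d\<in>{1..length Gs}. \<Sum>x<fst (Gs ! (d - 1)). \<Sum>x'<fst (Gs ! (d - 1)).
             if gsimeq (Gs ! (d - 1)) x x' then c d x x' * A_gen Gs d x x' $$ (i, j) else 0)})"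

text \<open>hat(H) \<otimes> C_q, as the element with H in position q and empty graphs elsewhere.\<close>
definition hat_tensor_C :: "sgraph \<Rightarrow> nat \<Rightarrow> ncgraph" where
  "hat_tensor_C H q = A_nc (replicate (q - 1) gempty @ [H])"

definition f_alpha :: "(sgraph \<Rightarrow> real) \<Rightarrow> real \<Rightarrow> sgraph list \<Rightarrow> real" where
  "f_alpha f \<alpha> Gs = (\<Sum>d\<in>{1..length Gs}. f (Gs ! (d - 1)) * real d powr \<alpha>)"

definition f_alpha_in_Delta_A :: "(sgraph \<Rightarrow> real) \<Rightarrow> real \<Rightarrow> bool" where
  "f_alpha_in_Delta_A f \<alpha> \<longleftrightarrow>
     (\<forall>Gs1 Gs2. (\<forall>G\<in>set Gs1. is_sgraph G) \<longrightarrow> (\<forall>G\<in>set Gs2. is_sgraph G) \<longrightarrow>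
        ncle (A_nc Gs1) (A_nc Gs2) \<longrightarrow> f_alpha f \<alpha> Gs1 \<le> f_alpha f \<alpha> Gs2)"

end

theory Submission
  imports Defs
begin


lemma adj_dim[simp]: "dim_row (mat_adjoint A) = dim_col A" "dim_col (mat_adjoint A) = dim_row A"
  by (auto simp: mat_adjoint_def)

lemma adj_idx[simp]: "i < dim_col A \<Longrightarrow> j < dim_row A \<Longrightarrow> mat_adjoint A $$ (i,j) = conjugate (A $$ (j,i))"
  unfolding mat_adjoint_def mat_of_rows_def by simp

lemma triple_idx:
  fixes X Y Z :: "'a::comm_semiring_0 mat"
  assumes "X \<in> carrier_mat n1 n2" "Y \<in> carrier_mat n2 n3" "Z \<in> carrier_mat n3 n4" "a < n1" "b < n4"
  shows "(X * Y * Z) $$ (a,b) = (\<Sum>j<n3. (\<Sum>i<n2. X $$ (a,i) * Y $$ (i,j)) * Z $$ (j,b))"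
proof -
  have "(X * Y * Z) $$ (a,b) = (\<Sum>j<n3. (X*Y) $$ (a,j) * Z $$ (j,b))"
    using assms by (subst index_mult_mat) (auto simp: scalar_prod_def atLeast0LessThan)
  also have "\<dots> = (\<Sum>j<n3. (\<Sum>i<n2. X $$ (a,i) * Y $$ (i,j)) * Z $$ (j,b))"
    using assms by (intro sum.cong refl) (auto simp: scalar_prod_def atLeast0LessThan)
  finally show ?thesis .
qed

lemma off_Suc: "1 \<le> d \<Longrightarrow> A_off Gs (Suc d) = A_off Gs d + fst (Gs ! (d-1)) * d"
  unfolding A_off_def by (simp add: atLeastLessThanSuc add.commute)

lemma off_mono: "d \<le> d' \<Longrightarrow> A_off Gs d \<le> A_off Gs d'"
  unfolding A_off_def by (rule sum_mono2) auto

lemma dim_off: "A_dim Gs = A_off Gs (Suc (length Gs))"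
  unfolding A_off_def A_dim_def by (simp add: atLeastLessThanSuc_atLeastAtMost)

lemma idx_bound:
  assumes "1 \<le> d" "d \<le> length Gs" "x < fst (Gs ! (d-1))" "k < d"
  shows "A_off Gs d + x*d + k < A_dim Gs"
proof -
  have "x*d + k < (x+1)*d" using assms by simp
  also have "\<dots> \<le> fst (Gs ! (d-1)) * d" using assms by (intro mult_right_mono) auto
  finally have "A_off Gs d + x*d + k < A_off Gs (Suc d)" using off_Suc[OF assms(1)] by simp
  also have "\<dots> \<le> A_dim Gs" unfolding dim_off using assms by (intro off_mono) auto
  finally show ?thesis .
qed

lemma decomp:
  "i < A_off Gs D \<Longrightarrow> \<exists>d. 1 \<le> d \<and> d < D \<and> A_off Gs d \<le> i \<and> i < A_off Gs d + fst (Gs ! (d-1)) * d"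
proof (induction D)
  case 0 then show ?case by (simp add: A_off_def)
next
  case (Suc D)
  show ?case
  proof (cases "i < A_off Gs D")
    case True then show ?thesis using Suc.IH by (meson less_SucI)
  next
    case False
    have "A_off Gs (Suc 0) = 0" by (simp add: A_off_def)
    then have "D \<noteq> 0" using Suc.prems by (metis not_less0)
    then show ?thesis using False Suc.prems off_Suc[of D Gs] by (intro exI[of _ D]) auto
  qed
qed

lemma decomp2:
  assumes "i < A_off Gs D"
  shows "\<exists>d x k. 1 \<le> d \<and> d < D \<and> x < fst (Gs ! (d-1)) \<and> k < d \<and> i = A_off Gs d + x*d + k"
proof -
  obtain d where d: "1 \<le> d" "d < D" "A_off Gs d \<le> i" "i < A_off Gs d + fst (Gs ! (d-1)) * d"
    using decomp[OF assms] by blast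
  define j where "j = i - A_off Gs d"
  have j: "j < fst (Gs ! (d-1)) * d" using d unfolding j_def by simp
  have "j div d < fst (Gs ! (d-1))" using j d(1) by (simp add: less_mult_imp_div_less)
  moreover have "i = A_off Gs d + (j div d) * d + j mod d" using d(3) unfolding j_def by simp
  ultimately show ?thesis using d(1,2) by (intro exI[of _ d] exI[of _ "j div d"] exI[of _ "j mod d"]) auto
qed

lemma sum_shift_zero:
  fixes f :: "nat \<Rightarrow> 'a::comm_monoid_add"
  assumes "P \<le> N" "\<And>i. i < P \<Longrightarrow> f i = 0"
  shows "(\<Sum>i<N. f i) = (\<Sum>i<N-P. f (i+P))"
proof -
  have "{..<N} = {..<P} \<union> {P..<N}" using assms by auto
  then have "(\<Sum>i<N. f i) = (\<Sum>i<P. f i) + (\<Sum>i\<in>{P..<N}. f i)"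
    by (metis finite_lessThan finite_atLeastLessThan ivl_disj_int_one(2) sum.union_disjoint)
  also have "\<dots> = (\<Sum>i\<in>{P..<N}. f i)" using assms by simp
  also have "\<dots> = (\<Sum>i<N-P. f (i+P))"
    using sum.shift_bounds_nat_ivl[of f 0 P "N-P"] assms by (simp add: lessThan_atLeast0 add.commute)
  finally show ?thesis .
qed



lemma L_len: "length (replicate (q - 1) gempty @ [H]) = q" if "0 < q" using that by simp

lemma L_nth: "0 < q \<Longrightarrow> 1 \<le> d \<Longrightarrow> d \<le> q \<Longrightarrow>
   (replicate (q - 1) gempty @ [H]) ! (d - 1) = (if d = q then H else gempty)"
  by (auto simp: nth_append)

lemma L_off: "0 < q \<Longrightarrow> A_off (replicate (q - 1) gempty @ [H]) q = 0"
  unfolding A_off_def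
proof (intro sum.neutral ballI)
  fix d assume "0 < q" "d \<in> {1..<q}"
  then show "fst ((replicate (q - 1) gempty @ [H]) ! (d - 1)) * d = 0"
    using L_nth[of q d H] by (simp add: gempty_def)
qed

lemma L_dim: "0 < q \<Longrightarrow> A_dim (replicate (q - 1) gempty @ [H]) = fst H * q"
proof -
  assume q: "0 < q"
  have "A_dim (replicate (q - 1) gempty @ [H]) = A_off (replicate (q - 1) gempty @ [H]) (Suc q)"
    using dim_off q by simp
  also have "\<dots> = fst H * q" using off_Suc[of q] L_off[OF q] L_nth[OF q, of q H] q by simp
  finally show ?thesis .
qed

lemma divmod_eq: "(y::nat)*q+l = x*q+k \<Longrightarrow> l < q \<Longrightarrow> k < q \<Longrightarrow> x = y \<and> k = l"
proof -
  assume h: "y*q+l = x*q+k" "l < q" "k < q"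
  have "x = (x*q+k) div q" "k = (x*q+k) mod q" using h by auto
  then have "x = (y*q+l) div q" "k = (y*q+l) mod q" using h(1) by simp_all
  then show ?thesis using h(2,3) by simp
qed

lemma T_entry:
  assumes q: "0 < q" and M: "M \<in> snd (hat_tensor_C H q)" and y: "y < fst H"
  shows "\<exists>cc. \<forall>l<q. \<forall>l'<q. M $$ (y*q+l, y*q+l') = (if l = l' then cc else 0)"
proof -
  let ?L = "replicate (q - 1) gempty @ [H]"
  obtain c where c: "M = mat (A_dim ?L) (A_dim ?L) (\<lambda>(i, j).
          \<Sum>d\<in>{1..length ?L}. \<Sum>x<fst (?L ! (d - 1)). \<Sum>x'<fst (?L ! (d - 1)).
             if gsimeq (?L ! (d - 1)) x x' then c d x x' * A_gen ?L d x x' $$ (i, j) else 0)"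
    using M unfolding hat_tensor_C_def A_nc_def by auto
  have main: "M $$ (y*q+l, y*q+l') = (if l = l' then c q y y else 0)" if l: "l < q" "l' < q" for l l'
  proof -
    have lt0: "y*q+l'' < fst H * q" if "l'' < q" for l''
    proof -
      have "y*q+l'' < (y+1)*q" using that by simp
      also have "\<dots> \<le> fst H * q" using y by (intro mult_right_mono) auto
      finally show ?thesis .
    qed
    have lt: "y*q+l < fst H * q" "y*q+l' < fst H * q" using lt0 l by auto
    have "M $$ (y*q+l, y*q+l') = (\<Sum>d\<in>{1..q}. \<Sum>x<fst (?L ! (d - 1)). \<Sum>x'<fst (?L ! (d - 1)).
             if gsimeq (?L ! (d - 1)) x x' then c d x x' * A_gen ?L d x x' $$ (y*q+l, y*q+l') else 0)"
    proof -
      have dL: "A_dim (replicate (q - Suc 0) gempty @ [H]) = fst H * q" using L_dim[OF q, of H] by simp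
      show ?thesis using c lt q dL by simp
    qed
    also have "\<dots> = (\<Sum>d\<in>{1..q}. if d = q then (\<Sum>x<fst H. \<Sum>x'<fst H.
             if x = y \<and> x' = y \<and> l = l' then c q y y else 0) else 0)"
    proof (intro sum.cong refl)
      fix d assume d: "d \<in> {1..q}"
      show "(\<Sum>x<fst (?L ! (d - 1)). \<Sum>x'<fst (?L ! (d - 1)).
             if gsimeq (?L ! (d - 1)) x x' then c d x x' * A_gen ?L d x x' $$ (y*q+l, y*q+l') else 0) =
         (if d = q then (\<Sum>x<fst H. \<Sum>x'<fst H.
             if x = y \<and> x' = y \<and> l = l' then c q y y else 0) else 0)"
      proof (cases "d = q")
        case False
        have Ld: "?L ! (d - 1) = gempty" using L_nth[OF q, of d H] d False by simp
        show ?thesis unfolding Ld using False by (simp add: gempty_def)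
      next
        case True
        have Lq: "?L ! (q - 1) = H" using L_nth[OF q, of q H] q by simp
        have qq: "(q = q) = True" by simp
        show ?thesis unfolding True Lq qq if_True
        proof (intro sum.cong refl)
          fix x x' assume x: "x \<in> {..<fst H}" "x' \<in> {..<fst H}"
          have g: "A_gen ?L q x x' $$ (y*q+l, y*q+l') = (if x = y \<and> x' = y \<and> l = l' then 1 else 0)"
          proof -
            have e: "(\<exists>k<q. y*q+l = 0 + x*q+k \<and> y*q+l' = 0 + x'*q+k) \<longleftrightarrow> (x = y \<and> x' = y \<and> l = l')"
            proof
              assume "\<exists>k<q. y*q+l = 0 + x*q+k \<and> y*q+l' = 0 + x'*q+k"
              then obtain k where k: "k < q" "y*q+l = x*q+k" "y*q+l' = x'*q+k" by auto
              show "x = y \<and> x' = y \<and> l = l'"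
                using divmod_eq[OF k(2) l(1) k(1)] divmod_eq[OF k(3) l(2) k(1)] by simp
            next
              assume "x = y \<and> x' = y \<and> l = l'"
              then show "\<exists>k<q. y*q+l = 0 + x*q+k \<and> y*q+l' = 0 + x'*q+k" using l by auto
            qed
            show ?thesis unfolding A_gen_def L_off[OF q] using lt L_dim[OF q, of H] e
              by (simp del: add_0)
          qed
          show "(if gsimeq H x x' then c q x x' * A_gen ?L q x x' $$ (y*q+l, y*q+l') else 0)
             = (if x = y \<and> x' = y \<and> l = l' then c q y y else 0)"
            unfolding g by (auto simp: gsimeq_def)
        qed
      qed
    qed
    also have "\<dots> = (if l = l' then c q y y else 0)"
    proof -
      have inner: "(\<Sum>x'<fst H. if x = y \<and> x' = y \<and> l = l' then c q y y else 0) = (if x = y \<and> l = l' then c q y y else 0)" for x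
      proof (cases "x = y \<and> l = l'")
        case True then show ?thesis using y by simp
      next
        case False then show ?thesis by auto
      qed
      have "(\<Sum>x<fst H. \<Sum>x'<fst H. if x = y \<and> x' = y \<and> l = l' then c q y y else 0) = (if l = l' then c q y y else 0)"
      proof (cases "l = l'")
        case True then show ?thesis unfolding inner using y by simp
      next
        case False then show ?thesis unfolding inner by simp
      qed
      moreover have "(\<Sum>d\<in>{1..q}. if d = q then X else 0) = X" for X :: complex using q by simp
      ultimately show ?thesis by simp
    qed
    finally show ?thesis .
  qed
  show ?thesis
    apply (rule exI[of _ "c q y y"])
    apply (intro allI impI)
    apply (rule main)
    by assumption+
qed



lemma proj_triple:
  fixes E G :: "complex mat"
  assumes E: "E \<in> carrier_mat N K" and G: "G \<in> carrier_mat N N"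
    and Gi: "\<And>i j. i < N \<Longrightarrow> j < N \<Longrightarrow> G $$ (i,j) = (if i = j \<and> i \<in> I then 1 else 0)"
    and I: "I \<subseteq> {..<N}" and ab: "a < K" "b < K"
  shows "(mat_adjoint E * G * E) $$ (a,b) = (\<Sum>i\<in>I. cnj (E $$ (i,a)) * E $$ (i,b))"
proof -
  have AE: "mat_adjoint E \<in> carrier_mat K N" using E by (intro carrier_matI) auto
  have "(mat_adjoint E * G * E) $$ (a,b) = (\<Sum>j<N. (\<Sum>i<N. mat_adjoint E $$ (a,i) * G $$ (i,j)) * E $$ (j,b))"
    by (rule triple_idx[OF AE G E ab])
  also have "\<dots> = (\<Sum>j<N. if j \<in> I then cnj (E $$ (j,a)) * E $$ (j,b) else 0)"
  proof (intro sum.cong refl)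
    fix j assume j: "j \<in> {..<N}"
    have "(\<Sum>i<N. mat_adjoint E $$ (a,i) * G $$ (i,j)) = (\<Sum>i<N. if i = j then (if j \<in> I then cnj (E $$ (j,a)) else 0) else 0)"
      using j E ab Gi by (intro sum.cong refl) auto
    also have "\<dots> = (if j \<in> I then cnj (E $$ (j,a)) else 0)" using j by simp
    finally show "(\<Sum>i<N. mat_adjoint E $$ (a,i) * G $$ (i,j)) * E $$ (j,b) = (if j \<in> I then cnj (E $$ (j,a)) * E $$ (j,b) else 0)"
      by simp
  qed
  also have "\<dots> = (\<Sum>i\<in>I. cnj (E $$ (i,a)) * E $$ (i,b))"
    using I by (simp add: sum.If_cases Int_absorb1)
  finally show ?thesis .
qed

lemma gen_entry:
  assumes "1 \<le> d" "d \<le> length Gs" "x < fst (Gs ! (d-1))" "i < A_dim Gs" "j < A_dim Gs"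
  shows "A_gen Gs d x x $$ (i,j) = (if i = j \<and> i \<in> {A_off Gs d + x*d..<A_off Gs d + x*d + d} then 1 else 0)"
proof -
  have "(\<exists>k<d. i = A_off Gs d + x * d + k \<and> j = A_off Gs d + x * d + k) \<longleftrightarrow>
     (i = j \<and> i \<in> {A_off Gs d + x*d..<A_off Gs d + x*d + d})"
    by (auto intro: exI[of _ "i - (A_off Gs d + x*d)"])
  then show ?thesis using assms unfolding A_gen_def by simp
qed

lemma S_gen:
  assumes d: "1 \<le> d" "d \<le> length Gs" and x: "x < fst (Gs ! (d-1))"
  shows "A_gen Gs d x x \<in> snd (A_nc Gs)"
proof -
  let ?c = "\<lambda>d' x1 x2. if d' = d \<and> x1 = x \<and> x2 = x then (1::complex) else 0"
  have "A_gen Gs d x x = mat (A_dim Gs) (A_dim Gs) (\<lambda>(i, j).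
          \<Sum>d'\<in>{1..length Gs}. \<Sum>x1<fst (Gs ! (d' - 1)). \<Sum>x2<fst (Gs ! (d' - 1)).
             if gsimeq (Gs ! (d' - 1)) x1 x2 then ?c d' x1 x2 * A_gen Gs d' x1 x2 $$ (i, j) else 0)"
    (is "_ = mat _ _ ?F")
  proof -
    have **: "?F (i,j) = A_gen Gs d x x $$ (i, j)" for i j
    proof -
    have "(\<Sum>d'\<in>{1..length Gs}. \<Sum>x1<fst (Gs ! (d' - 1)). \<Sum>x2<fst (Gs ! (d' - 1)).
             if gsimeq (Gs ! (d' - 1)) x1 x2 then ?c d' x1 x2 * A_gen Gs d' x1 x2 $$ (i, j) else 0)
       = (\<Sum>d'\<in>{1..length Gs}. \<Sum>x1<fst (Gs ! (d' - 1)). \<Sum>x2<fst (Gs ! (d' - 1)).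
             if d' = d then (if x1 = x then (if x2 = x then A_gen Gs d x x $$ (i, j) else 0) else 0) else 0)"
      by (intro sum.cong refl) (auto simp: gsimeq_def)
    also have "\<dots> = (\<Sum>d'\<in>{1..length Gs}. \<Sum>x1<fst (Gs ! (d' - 1)).
             if d' = d then (if x1 = x then A_gen Gs d x x $$ (i, j) else 0) else 0)"
      using x by (intro sum.cong refl) auto
    also have "\<dots> = (\<Sum>d'\<in>{1..length Gs}.
             if d' = d then A_gen Gs d x x $$ (i, j) else 0)"
      using x by (intro sum.cong refl) auto
    also have "\<dots> = A_gen Gs d x x $$ (i, j)" using d x by simp
    finally show ?thesis by simp
    qed
    have *: "A_gen Gs d x x $$ (i, j) = mat (A_dim Gs) (A_dim Gs) ?F $$ (i,j)"
      if "i < A_dim Gs" "j < A_dim Gs" for i j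
      using index_mat(1)[OF that, of ?F] **[of i j] by simp
    show ?thesis
      apply (rule eq_matI)
      subgoal for i j by (rule *) auto
      by (simp_all add: A_gen_def)
  qed
  then show ?thesis unfolding A_nc_def snd_conv mem_Collect_eq by (rule exI[of _ ?c])
qed



lemma det_zero_row:
  fixes W :: "'a::comm_ring_1 mat"
  assumes "W \<in> carrier_mat n n" "k < n" "\<And>j. j < n \<Longrightarrow> W $$ (k,j) = 0"
  shows "det W = 0"
proof -
  have "(\<Prod>i = 0..<n. W $$ (i, p i)) = 0" if "p permutes {0..<n}" for p
    using assms that by (intro prod_zero bexI[of _ k]) (auto simp: permutes_in_image)
  then show ?thesis using assms unfolding det_def by simp
qed

lemma cnj_sum_zero:
  fixes e :: "nat \<Rightarrow> complex"
  assumes "(\<Sum>k<d. cnj (e k) * e k) = 0" "k < d"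
  shows "e k = 0"
proof -
  have "(\<Sum>k<d. cnj (e k) * e k) = complex_of_real (\<Sum>k<d. (cmod (e k))^2)"
  proof -
    have "cnj (e k) * e k = complex_of_real ((cmod (e k))^2)" for k
      using complex_norm_square[of "e k"] by (simp add: mult.commute)
    then show ?thesis by (simp add: of_real_sum)
  qed
  then have "complex_of_real (\<Sum>k<d. (cmod (e k))^2) = 0" using assms(1) by (simp only:)
  then have "(\<Sum>k<d. (cmod (e k))^2) = 0" by (simp only: of_real_eq_0_iff)
  then have "(cmod (e k))^2 = 0" using assms(2) by (subst (asm) sum_nonneg_eq_0_iff) auto
  then show ?thesis by simp
qed

lemma zero_row:
  assumes coh: "cohom (hat_tensor_C H q) (A_nc Gs) Es" and E: "E \<in> set Es" and q: "0 < q"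
    and d: "1 \<le> d" "d < q" "d \<le> length Gs" and x: "x < fst (Gs ! (d-1))" and k: "k < d"
    and a: "a < fst H * q"
  shows "E $$ (A_off Gs d + x*d + k, a) = 0"
proof -
  define p where "p = A_off Gs d + x*d"
  define N where "N = A_dim Gs"
  define m where "m = fst H"
  have Tdim: "fst (hat_tensor_C H q) = m * q" unfolding hat_tensor_C_def A_nc_def m_def using L_dim[OF q] by simp
  have Ec: "E \<in> carrier_mat N (m*q)" using coh E Tdim unfolding cohom_def N_def A_nc_def by auto
  define G where "G = A_gen Gs d x x"
  have GS: "G \<in> snd (A_nc Gs)" unfolding G_def using S_gen d x by auto
  have M: "mat_adjoint E * G * E \<in> snd (hat_tensor_C H q)" using coh E GS unfolding cohom_def by blast
  have pd: "p + d \<le> N" using idx_bound[of d Gs x "d-1"] d x unfolding p_def N_def by simp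
  have Gc: "G \<in> carrier_mat N N" unfolding G_def A_gen_def N_def by simp
  have Mi: "(mat_adjoint E * G * E) $$ (a',b') = (\<Sum>k<d. cnj (E $$ (p+k,a')) * E $$ (p+k,b'))"
    if "a' < m*q" "b' < m*q" for a' b'
  proof -
    have "(mat_adjoint E * G * E) $$ (a',b') = (\<Sum>i\<in>{p..<p+d}. cnj (E $$ (i,a')) * E $$ (i,b'))"
    proof (rule proj_triple[OF Ec Gc])
      show "G $$ (i,j) = (if i = j \<and> i \<in> {p..<p+d} then 1 else 0)" if "i < N" "j < N" for i j
        unfolding G_def p_def using d x that unfolding N_def by (intro gen_entry) auto
    qed (use pd that in auto)
    also have "\<dots> = (\<Sum>k<d. cnj (E $$ (p+k,a')) * E $$ (p+k,b'))"
      using sum.shift_bounds_nat_ivl[of "\<lambda>i. cnj (E $$ (i,a')) * E $$ (i,b')" 0 p d]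
      by (simp add: lessThan_atLeast0 add.commute)
    finally show ?thesis .
  qed
  define y where "y = a div q"
  define l where "l = a mod q"
  have ay: "a = y*q + l" unfolding y_def l_def by simp
  have y: "y < m" using a unfolding y_def m_def by (simp add: less_mult_imp_div_less)
  have l: "l < q" using q unfolding l_def by simp
  obtain cc where cc: "\<And>l l'. l < q \<Longrightarrow> l' < q \<Longrightarrow> (mat_adjoint E * G * E) $$ (y*q+l, y*q+l') = (if l = l' then cc else 0)"
    using T_entry[OF q M, of y] y unfolding m_def by blast
  have yl: "y*q+l' < m*q" if "l' < q" for l'
  proof -
    have "y*q+l' < (y+1)*q" using that by simp
    also have "\<dots> \<le> m*q" using y by (intro mult_right_mono) auto
    finally show ?thesis .
  qed
  define W where "W = mat q q (\<lambda>(k,l). if k < d then E $$ (p+k, y*q+l) else 0)"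
  have Wc: "W \<in> carrier_mat q q" unfolding W_def by simp
  have WW: "mat_adjoint W * W = cc \<cdot>\<^sub>m 1\<^sub>m q"
  proof (rule eq_matI)
    fix i j assume ij: "i < dim_row (cc \<cdot>\<^sub>m 1\<^sub>m q)" "j < dim_col (cc \<cdot>\<^sub>m (1\<^sub>m q :: complex mat))"
    then have ij': "i < q" "j < q" by auto
    have "(mat_adjoint W * W) $$ (i,j) = (\<Sum>k<q. cnj (W $$ (k,i)) * W $$ (k,j))"
      using ij' Wc by (auto simp: scalar_prod_def atLeast0LessThan)
    also have "\<dots> = (\<Sum>k<q. if k < d then cnj (E $$ (p+k, y*q+i)) * E $$ (p+k, y*q+j) else 0)"
      using ij' unfolding W_def by (intro sum.cong refl) auto
    also have "\<dots> = (\<Sum>k<d. cnj (E $$ (p+k, y*q+i)) * E $$ (p+k, y*q+j))"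
    proof -
      have st: "{..<q} \<inter> {k. k < d} = {..<d}" using d by auto
      show ?thesis
        using sum.inter_restrict[of "{..<q}" "\<lambda>k. cnj (E $$ (p+k, y*q+i)) * E $$ (p+k, y*q+j)" "{k. k < d}"]
        unfolding st by simp
    qed
    also have "\<dots> = (mat_adjoint E * G * E) $$ (y*q+i, y*q+j)" using Mi yl ij' by simp
    also have "\<dots> = (if i = j then cc else 0)" using cc ij' by simp
    finally show "(mat_adjoint W * W) $$ (i,j) = (cc \<cdot>\<^sub>m 1\<^sub>m q) $$ (i,j)" using ij' by simp
  qed (use Wc in auto)
  have "det W = 0"
    by (rule det_zero_row[OF Wc, of "q-1"]) (use q d in \<open>auto simp: W_def\<close>)
  moreover have "det (mat_adjoint W * W) = det (mat_adjoint W) * det W"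
    by (rule det_mult[of _ q]) (use Wc in \<open>auto intro!: carrier_matI\<close>)
  ultimately have "cc ^ q = 0" using WW by simp
  then have "cc = 0" by simp
  then have "(\<Sum>k<d. cnj (E $$ (p+k,a)) * E $$ (p+k,a)) = 0"
  proof -
    have am: "a < m*q" using a unfolding m_def by simp
    have "(mat_adjoint E * G * E) $$ (a, a) = 0" using cc[OF l l] \<open>cc = 0\<close> ay by simp
    then show ?thesis using Mi[OF am am] by simp
  qed
  then show ?thesis using cnj_sum_zero[of "\<lambda>k. E $$ (p+k,a)" d k] k unfolding p_def by simp
qed



definition trunc :: "nat \<Rightarrow> sgraph list \<Rightarrow> sgraph list" where
  "trunc q Gs = map (\<lambda>i. if Suc i < q then gempty else Gs ! i) [0..<length Gs]"

lemma trunc_len[simp]: "length (trunc q Gs) = length Gs" by (simp add: trunc_def)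

lemma trunc_nth: "1 \<le> d \<Longrightarrow> d \<le> length Gs \<Longrightarrow> trunc q Gs ! (d-1) = (if d < q then gempty else Gs ! (d-1))"
  by (simp add: trunc_def)

lemma off_split:
  assumes "d \<le> Suc (length Gs)"
  shows "A_off Gs d = A_off Gs (min d q) + A_off (trunc q Gs) d"
proof -
  let ?g = "\<lambda>d'. fst (Gs ! (d' - 1)) * d'"
  have "A_off Gs d = (\<Sum>d'\<in>{1..<d}. if d' < q then ?g d' else 0) + (\<Sum>d'\<in>{1..<d}. if d' < q then 0 else ?g d')"
    unfolding A_off_def sum.distrib[symmetric] by (intro sum.cong refl) simp
  also have "(\<Sum>d'\<in>{1..<d}. if d' < q then ?g d' else 0) = A_off Gs (min d q)"
  proof -
    have "{1..<d} \<inter> {d'. d' < q} = {1..<min d q}" by auto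
    then show ?thesis unfolding A_off_def by (simp add: sum.If_cases)
  qed
  also have "(\<Sum>d'\<in>{1..<d}. if d' < q then 0 else ?g d') = A_off (trunc q Gs) d"
    unfolding A_off_def
  proof (intro sum.cong refl)
    fix d' assume d': "d' \<in> {1..<d}"
    then have "trunc q Gs ! (d'-1) = (if d' < q then gempty else Gs ! (d'-1))"
      using trunc_nth[of d' Gs q] assms by simp
    then show "(if d' < q then 0 else ?g d') = fst (trunc q Gs ! (d' - 1)) * d'"
      by (simp add: gempty_def)
  qed
  finally show ?thesis .
qed

lemma dim_split: "A_dim Gs = A_off Gs (min q (Suc (length Gs))) + A_dim (trunc q Gs)"
  using off_split[of "Suc (length Gs)" Gs q] by (simp add: dim_off min.commute)

lemma off_split2:
  assumes "q \<le> d" "d \<le> length Gs"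
  shows "A_off Gs d = A_off Gs (min q (Suc (length Gs))) + A_off (trunc q Gs) d"
proof -
  have m1: "min d q = q" using assms by simp
  have m2: "min q (Suc (length Gs)) = q" using assms by simp
  have "A_off Gs d = A_off Gs (min d q) + A_off (trunc q Gs) d" by (rule off_split) (use assms in simp)
  then show ?thesis using m1 m2 by (simp only:)
qed

lemma A_gen_idx: "i < A_dim Gs \<Longrightarrow> j < A_dim Gs \<Longrightarrow> A_gen Gs d x x' $$ (i,j) =
   (if \<exists>k<d. i = A_off Gs d + x*d + k \<and> j = A_off Gs d + x'*d + k then 1 else 0)"
  unfolding A_gen_def by (subst index_mat(1)) (simp_all only: prod.case)

lemma gen_shift:
  assumes "q \<le> d" "d \<le> length Gs" "i < A_dim Gs" "j < A_dim Gs"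
  defines "P \<equiv> A_off Gs (min q (Suc (length Gs)))"
  shows "A_gen Gs d x x' $$ (i,j) = (if P \<le> i \<and> P \<le> j then A_gen (trunc q Gs) d x x' $$ (i-P,j-P) else 0)"
proof -
  define o' where "o' = A_off (trunc q Gs) d"
  have o: "A_off Gs d = P + o'" unfolding P_def o'_def by (rule off_split2[OF assms(1,2)])
  have dm: "A_dim Gs = P + A_dim (trunc q Gs)" unfolding P_def by (rule dim_split)
  show ?thesis
  proof (cases "P \<le> i \<and> P \<le> j")
    case True
    have e1: "(i = P + o' + x * d + k) \<longleftrightarrow> (i - P = o' + x * d + k)" for k using True by arith
    have e2: "(j = P + o' + x' * d + k) \<longleftrightarrow> (j - P = o' + x' * d + k)" for k using True by arith
    have lt: "i - P < A_dim (trunc q Gs)" "j - P < A_dim (trunc q Gs)" using True assms(3,4) dm by arith+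
    show ?thesis unfolding A_gen_idx[OF assms(3,4)] A_gen_idx[OF lt] o e1 e2 o'_def[symmetric] using True by simp
  next
    case False
    have "\<not> (\<exists>k<d. i = A_off Gs d + x*d + k \<and> j = A_off Gs d + x'*d + k)" using False o by auto
    then show ?thesis unfolding A_gen_idx[OF assms(3,4)] by (simp only: if_not_P[OF False] if_False)
  qed
qed



lemma ext_in_S:
  assumes A': "A' \<in> snd (A_nc (trunc q Gs))"
  defines "P \<equiv> A_off Gs (min q (Suc (length Gs)))"
  shows "mat (A_dim Gs) (A_dim Gs) (\<lambda>(i,j). if P \<le> i \<and> P \<le> j then A' $$ (i-P, j-P) else 0) \<in> snd (A_nc Gs)"
proof -
  let ?T = "trunc q Gs"
  obtain c where c: "A' = mat (A_dim ?T) (A_dim ?T) (\<lambda>(i, j).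
          \<Sum>d\<in>{1..length ?T}. \<Sum>x<fst (?T ! (d - 1)). \<Sum>x'<fst (?T ! (d - 1)).
             if gsimeq (?T ! (d - 1)) x x' then c d x x' * A_gen ?T d x x' $$ (i, j) else 0)"
    using A' unfolding A_nc_def by auto
  define c2 where "c2 = (\<lambda>d x x'. if d < q then 0 else c d x x')"
  have dm: "A_dim Gs = P + A_dim ?T" unfolding P_def by (rule dim_split)
  have ent: "(if P \<le> i \<and> P \<le> j then A' $$ (i-P, j-P) else 0) =
     (\<Sum>d\<in>{1..length Gs}. \<Sum>x<fst (Gs ! (d - 1)). \<Sum>x'<fst (Gs ! (d - 1)).
             if gsimeq (Gs ! (d - 1)) x x' then c2 d x x' * A_gen Gs d x x' $$ (i, j) else 0)"
    if ij: "i < A_dim Gs" "j < A_dim Gs" for i j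
  proof -
    have "(\<Sum>d\<in>{1..length Gs}. \<Sum>x<fst (Gs ! (d - 1)). \<Sum>x'<fst (Gs ! (d - 1)).
             if gsimeq (Gs ! (d - 1)) x x' then c2 d x x' * A_gen Gs d x x' $$ (i, j) else 0)
       = (\<Sum>d\<in>{1..length Gs}. if P \<le> i \<and> P \<le> j then (\<Sum>x<fst (?T ! (d - 1)). \<Sum>x'<fst (?T ! (d - 1)).
             if gsimeq (?T ! (d - 1)) x x' then c d x x' * A_gen ?T d x x' $$ (i-P, j-P) else 0) else 0)"
    proof (intro sum.cong refl)
      fix d assume d: "d \<in> {1..length Gs}"
      show "(\<Sum>x<fst (Gs ! (d - 1)). \<Sum>x'<fst (Gs ! (d - 1)).
             if gsimeq (Gs ! (d - 1)) x x' then c2 d x x' * A_gen Gs d x x' $$ (i, j) else 0) =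
        (if P \<le> i \<and> P \<le> j then (\<Sum>x<fst (?T ! (d - 1)). \<Sum>x'<fst (?T ! (d - 1)).
             if gsimeq (?T ! (d - 1)) x x' then c d x x' * A_gen ?T d x x' $$ (i-P, j-P) else 0) else 0)"
      proof (cases "d < q")
        case True
        have Td: "?T ! (d-1) = gempty" using d True trunc_nth[of d Gs q] by simp
        show ?thesis unfolding Td using True by (simp add: c2_def gempty_def)
      next
        case False
        then have Td: "?T ! (d-1) = Gs ! (d-1)" using d trunc_nth[of d Gs q] by simp
        show ?thesis using False d gen_shift[of q d Gs i j] ij unfolding Td P_def
          by (auto simp: c2_def intro!: sum.cong)
      qed
    qed
    also have "\<dots> = (if P \<le> i \<and> P \<le> j then A' $$ (i-P, j-P) else 0)"
      using c ij dm by auto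
    finally show ?thesis by simp
  qed
  have "mat (A_dim Gs) (A_dim Gs) (\<lambda>(i,j). if P \<le> i \<and> P \<le> j then A' $$ (i-P, j-P) else 0) =
     mat (A_dim Gs) (A_dim Gs) (\<lambda>(i, j).
          \<Sum>d\<in>{1..length Gs}. \<Sum>x<fst (Gs ! (d - 1)). \<Sum>x'<fst (Gs ! (d - 1)).
             if gsimeq (Gs ! (d - 1)) x x' then c2 d x x' * A_gen Gs d x x' $$ (i, j) else 0)"
    by (rule eq_matI) (simp_all add: ent)
  then show ?thesis unfolding A_nc_def by auto
qed



lemma cohom_trunc:
  assumes coh: "cohom (hat_tensor_C H q) (A_nc Gs) Es" and q: "0 < q"
  shows "ncle (hat_tensor_C H q) (A_nc (trunc q Gs))"
proof -
  define N where "N = A_dim Gs"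
  define P where "P = A_off Gs (min q (Suc (length Gs)))"
  define m where "m = fst H"
  define sh where "sh = (\<lambda>E::complex mat. mat (N - P) (m*q) (\<lambda>(i,j). E $$ (i+P, j)))"
  have Tdim: "fst (hat_tensor_C H q) = m * q" unfolding hat_tensor_C_def A_nc_def m_def using L_dim[OF q] by simp
  have dm: "N = P + A_dim (trunc q Gs)" unfolding P_def N_def by (rule dim_split)
  have Ec: "E \<in> carrier_mat N (m*q)" if "E \<in> set Es" for E
    using coh that Tdim unfolding cohom_def N_def A_nc_def by auto
  have zr: "E $$ (i,a) = 0" if zE: "E \<in> set Es" and zi: "i < P" and za: "a < m*q" for E i a
  proof -
    obtain d x k where "1 \<le> d" "d < min q (Suc (length Gs))" "x < fst (Gs ! (d-1))" "k < d" "i = A_off Gs d + x*d + k"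
      using decomp2[of i Gs] zi unfolding P_def by blast
    then show ?thesis using zero_row[OF coh zE q, of d x k a] za unfolding m_def by auto
  qed
  have adjsh: "mat_adjoint (sh E) * sh E = mat_adjoint E * E" if E: "E \<in> set Es" for E
  proof (rule eq_matI)
    fix a b assume ab: "a < dim_row (mat_adjoint E * E)" "b < dim_col (mat_adjoint E * E)"
    then have ab': "a < m*q" "b < m*q" using Ec[OF E] by auto
    have "(mat_adjoint E * E) $$ (a,b) = (\<Sum>i<N. cnj (E $$ (i,a)) * E $$ (i,b))"
      using ab' Ec[OF E] by (auto simp: scalar_prod_def atLeast0LessThan)
    also have "\<dots> = (\<Sum>i<N-P. cnj (E $$ (i+P,a)) * E $$ (i+P,b))"
      using dm zr[OF E _ ab'(1)] by (intro sum_shift_zero) auto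
    also have "\<dots> = (mat_adjoint (sh E) * sh E) $$ (a,b)"
      using ab' by (auto simp: sh_def scalar_prod_def atLeast0LessThan intro!: sum.cong)
    finally show "(mat_adjoint (sh E) * sh E) $$ (a,b) = (mat_adjoint E * E) $$ (a,b)" by simp
  qed (use Ec[OF E] in \<open>auto simp: sh_def\<close>)
  have "cohom (hat_tensor_C H q) (A_nc (trunc q Gs)) (map sh Es)"
    unfolding cohom_def
  proof (intro conjI ballI)
    fix E assume "E \<in> set (map sh Es)"
    then show "E \<in> carrier_mat (fst (A_nc (trunc q Gs))) (fst (hat_tensor_C H q))"
      using dm Tdim by (auto simp: sh_def A_nc_def)
  next
    have "foldr (\<lambda>E acc. mat_adjoint E * E + acc) (map sh Es) (0\<^sub>m (fst (hat_tensor_C H q)) (fst (hat_tensor_C H q)))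
      = foldr (\<lambda>E acc. mat_adjoint E * E + acc) Es (0\<^sub>m (fst (hat_tensor_C H q)) (fst (hat_tensor_C H q)))"
      unfolding foldr_map by (intro foldr_cong) (auto simp: adjsh)
    then show "foldr (\<lambda>E acc. mat_adjoint E * E + acc) (map sh Es) (0\<^sub>m (fst (hat_tensor_C H q)) (fst (hat_tensor_C H q))) =
        1\<^sub>m (fst (hat_tensor_C H q))" using coh unfolding cohom_def by simp
  next
    fix A' X Y assume A': "A' \<in> snd (A_nc (trunc q Gs))" and X: "X \<in> set (map sh Es)" and Y: "Y \<in> set (map sh Es)"
    obtain E1 E2 where E: "E1 \<in> set Es" "E2 \<in> set Es" "X = sh E1" "Y = sh E2" using X Y by auto
    define Ax where "Ax = mat (A_dim Gs) (A_dim Gs) (\<lambda>(i,j). if P \<le> i \<and> P \<le> j then A' $$ (i-P, j-P) else 0)"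
    have AxS: "Ax \<in> snd (A_nc Gs)" using ext_in_S[OF A'] unfolding Ax_def P_def by simp
    have A'c: "A' \<in> carrier_mat (N-P) (N-P)" using A' dm by (auto simp: A_nc_def)
    have Axc: "Ax \<in> carrier_mat N N" unfolding Ax_def N_def by simp
    have adjc: "mat_adjoint E \<in> carrier_mat (m*q) N" if "E \<in> set Es" for E
      using Ec[OF that] by (intro carrier_matI) auto
    have adjshc: "mat_adjoint (sh E) \<in> carrier_mat (m*q) (N-P)" for E
      by (intro carrier_matI) (auto simp: sh_def)
    have shc: "sh E \<in> carrier_mat (N-P) (m*q)" for E by (simp add: sh_def)
    have "mat_adjoint (sh E1) * A' * sh E2 = mat_adjoint E1 * Ax * E2"
    proof (rule eq_matI)
      fix a b assume ab: "a < dim_row (mat_adjoint E1 * Ax * E2)" "b < dim_col (mat_adjoint E1 * Ax * E2)"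
      then have ab': "a < m*q" "b < m*q" using Ec[OF E(1)] Ec[OF E(2)] by auto
      have inner: "(\<Sum>i<N. mat_adjoint E1 $$ (a,i) * Ax $$ (i,j)) =
          (if P \<le> j then (\<Sum>i<N-P. cnj (E1 $$ (i+P,a)) * A' $$ (i, j-P)) else 0)" if j: "j < N" for j
      proof -
        have "(\<Sum>i<N. mat_adjoint E1 $$ (a,i) * Ax $$ (i,j)) = (\<Sum>i<N-P. mat_adjoint E1 $$ (a,i+P) * Ax $$ (i+P,j))"
          using dm j by (intro sum_shift_zero) (auto simp: Ax_def N_def)
        also have "\<dots> = (if P \<le> j then (\<Sum>i<N-P. cnj (E1 $$ (i+P,a)) * A' $$ (i, j-P)) else 0)"
          using j ab' Ec[OF E(1)] dm by (auto simp: Ax_def N_def intro!: sum.cong)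
        finally show ?thesis .
      qed
      have "(mat_adjoint E1 * Ax * E2) $$ (a,b) = (\<Sum>j<N. (\<Sum>i<N. mat_adjoint E1 $$ (a,i) * Ax $$ (i,j)) * E2 $$ (j,b))"
        by (rule triple_idx[OF adjc[OF E(1)] Axc Ec[OF E(2)] ab'])
      also have "\<dots> = (\<Sum>j<N. (if P \<le> j then (\<Sum>i<N-P. cnj (E1 $$ (i+P,a)) * A' $$ (i, j-P)) else 0) * E2 $$ (j,b))"
        using inner by (intro sum.cong refl) auto
      also have "\<dots> = (\<Sum>j<N-P. (\<Sum>i<N-P. cnj (E1 $$ (i+P,a)) * A' $$ (i, j)) * E2 $$ (j+P,b))"
        using dm by (subst sum_shift_zero[of P]) auto
      also have "\<dots> = (\<Sum>j<N-P. (\<Sum>i<N-P. mat_adjoint (sh E1) $$ (a,i) * A' $$ (i,j)) * sh E2 $$ (j,b))"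
        using ab' by (intro sum.cong refl) (auto simp: sh_def)
      also have "\<dots> = (mat_adjoint (sh E1) * A' * sh E2) $$ (a,b)"
        by (rule triple_idx[OF adjshc A'c shc ab', symmetric])
      finally show "(mat_adjoint (sh E1) * A' * sh E2) $$ (a,b) = (mat_adjoint E1 * Ax * E2) $$ (a,b)" by simp
    qed (use A'c Ec[OF E(1)] Ec[OF E(2)] in \<open>auto simp: sh_def\<close>)
    moreover have "mat_adjoint E1 * Ax * E2 \<in> snd (hat_tensor_C H q)"
      using coh AxS E unfolding cohom_def by blast
    ultimately show "mat_adjoint X * A' * Y \<in> snd (hat_tensor_C H q)" using E by simp
  qed
  then show ?thesis unfolding ncle_def by blast
qed



theorem corollary3p3:
  fixes f :: "sgraph \<Rightarrow> real" and \<alpha> \<beta> :: real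
    and H :: sgraph and Gs :: "sgraph list" and q :: nat
  assumes "Delta_G f"
    and "1 \<le> \<alpha>" and "\<alpha> \<le> \<beta>"
    and "f_alpha_in_Delta_A f \<alpha>"
    and "is_sgraph H" and "\<forall>G\<in>set Gs. is_sgraph G"
    and "0 < q"
    and "ncle (hat_tensor_C H q) (A_nc Gs)"
  shows "f H * real q powr \<beta> \<le> (\<Sum>d\<in>{1..length Gs}. f (Gs ! (d - 1)) * real d powr \<beta>)"
proof -
  note q = assms(7)
  let ?L = "replicate (q - 1) gempty @ [H]"
  let ?T = "trunc q Gs"
  have f0: "f gempty = 0" and fnn: "\<And>G. is_sgraph G \<Longrightarrow> f G \<ge> 0" using assms(1) unfolding Delta_G_def by auto
  have ge: "is_sgraph gempty" by (simp add: is_sgraph_def gempty_def)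
  obtain Es where "cohom (hat_tensor_C H q) (A_nc Gs) Es" using assms(8) unfolding ncle_def by blast
  then have nc: "ncle (A_nc ?L) (A_nc ?T)" using cohom_trunc q unfolding hat_tensor_C_def by blast
  have sL: "\<forall>G\<in>set ?L. is_sgraph G" using ge assms(5) by auto
  have sT: "\<forall>G\<in>set ?T. is_sgraph G" using ge assms(6) by (auto simp: trunc_def)
  have mono: "f_alpha f \<alpha> ?L \<le> f_alpha f \<alpha> ?T"
    using assms(4) sL sT nc unfolding f_alpha_in_Delta_A_def by blast
  have fL: "f_alpha f \<alpha> ?L = f H * real q powr \<alpha>"
  proof -
    have "f_alpha f \<alpha> ?L = (\<Sum>d\<in>{1..q}. if d = q then f H * real q powr \<alpha> else 0)"
      unfolding f_alpha_def L_len[OF q]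
    proof (intro sum.cong refl)
      fix d assume d: "d \<in> {1..q}"
      then have "?L ! (d - 1) = (if d = q then H else gempty)" using L_nth[OF q, of d H] by simp
      then show "f (?L ! (d - 1)) * real d powr \<alpha> = (if d = q then f H * real q powr \<alpha> else 0)"
        using f0 by simp
    qed
    also have "\<dots> = f H * real q powr \<alpha>" using q by simp
    finally show ?thesis .
  qed
  have fT: "f_alpha f \<alpha> ?T = (\<Sum>d\<in>{1..length Gs}. if d < q then 0 else f (Gs ! (d - 1)) * real d powr \<alpha>)"
    unfolding f_alpha_def trunc_len
  proof (intro sum.cong refl)
    fix d assume d: "d \<in> {1..length Gs}"
    then have "?T ! (d - 1) = (if d < q then gempty else Gs ! (d - 1))" using trunc_nth[of d Gs q] by simp
    then show "f (?T ! (d - 1)) * real d powr \<alpha> = (if d < q then 0 else f (Gs ! (d - 1)) * real d powr \<alpha>)"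
      using f0 by simp
  qed
  have "f H * real q powr \<beta> = f H * real q powr \<alpha> * real q powr (\<beta> - \<alpha>)"
    by (simp add: powr_add[symmetric])
  also have "\<dots> \<le> (\<Sum>d\<in>{1..length Gs}. if d < q then 0 else f (Gs ! (d - 1)) * real d powr \<alpha>) * real q powr (\<beta> - \<alpha>)"
    using mono fL fT by (intro mult_right_mono) auto
  also have "\<dots> = (\<Sum>d\<in>{1..length Gs}. if d < q then 0 else f (Gs ! (d - 1)) * real d powr \<alpha> * real q powr (\<beta> - \<alpha>))"
    unfolding sum_distrib_right by (intro sum.cong refl) simp
  also have "\<dots> \<le> (\<Sum>d\<in>{1..length Gs}. f (Gs ! (d - 1)) * real d powr \<beta>)"
  proof (intro sum_mono)
    fix d assume d: "d \<in> {1..length Gs}"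
    have G: "is_sgraph (Gs ! (d-1))" using d assms(6) by auto
    show "(if d < q then 0 else f (Gs ! (d - 1)) * real d powr \<alpha> * real q powr (\<beta> - \<alpha>)) \<le> f (Gs ! (d - 1)) * real d powr \<beta>"
    proof (cases "d < q")
      case True then show ?thesis using fnn[OF G] by simp
    next
      case False
      have "real q powr (\<beta> - \<alpha>) \<le> real d powr (\<beta> - \<alpha>)"
        using False assms(3) q by (intro powr_mono2) auto
      then have "f (Gs ! (d - 1)) * real d powr \<alpha> * real q powr (\<beta> - \<alpha>) \<le> f (Gs ! (d - 1)) * real d powr \<alpha> * real d powr (\<beta> - \<alpha>)"
        using fnn[OF G] by (intro mult_left_mono) auto
      also have "\<dots> = f (Gs ! (d - 1)) * real d powr \<beta>" using d by (simp add: powr_add[symmetric])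
      finally show ?thesis using False by simp
    qed
  qed
  finally show ?thesis .
qed

end
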